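(* Let $\mathbb A=(A_n)_{n\in\mathbb Z^+}$ be a sequence of invertible linear operators on $\mathbb R^d$ and $\mathcal S=\{\|\cdot\|_n;\ n\in\mathbb Z^+\}$ a sequence of norms such that there exist $K,a>0$ with $\|\mathcal A(m,n)x\|_m\le Ke^{a(m-n)}\|x\|_n$ and $\|\mathcal A(n,m)x\|_n\le Ke^{a(m-n)}\|x\|_m$ for all $m\ge n$, $x$. Let $\Sigma=\Sigma_{ED,\mathbb A,\mathcal S}$. Then $\Sigma$ is closed in $(0,\infty)$. Moreover, for every $r\in(0,\infty)\setminus\Sigma$ there is an open interval $I\ni r$ such that $S_r(n)=S_{r'}(n)$ for all $n\in\mathbb Z^+$ and all $r'\in I$.
   Context: $\mathbb Z^+=\{0,1,\dots\}$. $\mathcal A(m,n)=A_{m-1}\cdots A_n$ ($m>n$), $\mathrm{Id}$ ($m=n$), $A_m^{-1}\cdots A_{n-1}^{-1}$ ($m<n$). For $r>0$, $n\in\mathbb Z^+$: $S_r(n)=\{v\in\mathbb R^d:\ \sup_{m\ge n}r^{-(m-n)}\|\mathcal A(m,n)v\|_m<+\infty\}$. A sequence $(C_n)_{n\in\mathbb Z^+}$ with cocycle $\mathcal C$ admits a strong exponential dichotomy w.r.t. $\mathcal S$ if there exist $K>0$, $a\ge\lambda>0$ and projections $P_n$ with $C_nP_n=P_{n+1}C_n$ such that for $m\ge n$, $x$, $Q_m=\mathrm{Id}-P_m$: $\|\mathcal C(m,n)P_nx\|_m\le Ke^{-\lambda(m-n)}\|x\|_n$, $\|\mathcal C(n,m)Q_mx\|_n\le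 Ke^{-\lambda(m-n)}\|x\|_m$, $\|\mathcal C(m,n)x\|_m\le Ke^{a(m-n)}\|x\|_n$, $\|\mathcal C(n,m)x\|_n\le Ke^{a(m-n)}\|x\|_m$. $\Sigma_{ED,\mathbb A,\mathcal S}$: set of $\tau>0$ such that $(\tau^{-1}A_n)_{n\in\mathbb Z^+}$ does not admit a strong exponential dichotomy w.r.t. $\mathcal S$. *)

theory Defs
  imports "HOL-Analysis.Analysis"
begin

definition is_norm :: "(real^'d \<Rightarrow> real) \<Rightarrow> bool" where
  "is_norm N \<longleftrightarrow> (\<forall>x. 0 \<le> N x) \<and> (\<forall>x. N x = 0 \<longleftrightarrow> x = 0)
     \<and> (\<forall>c x. N (c *\<^sub>R x) = \<bar>c\<bar> * N x) \<and> (\<forall>x y. N (x + y) \<le> N x + N y)"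

fun cocycle_fwd :: "(nat \<Rightarrow> real^'d^'d) \<Rightarrow> nat \<Rightarrow> nat \<Rightarrow> real^'d^'d" where
  "cocycle_fwd A n 0 = mat 1"
| "cocycle_fwd A n (Suc k) = A (n + k) ** cocycle_fwd A n k"

definition cocycle :: "(nat \<Rightarrow> real^'d^'d) \<Rightarrow> nat \<Rightarrow> nat \<Rightarrow> real^'d^'d" where
  "cocycle A m n = (if n \<le> m then cocycle_fwd A n (m - n)
                    else matrix_inv (cocycle_fwd A m (n - m)))"

definition strong_ED :: "(nat \<Rightarrow> real^'d^'d) \<Rightarrow> (nat \<Rightarrow> real^'d \<Rightarrow> real) \<Rightarrow> bool" where
  "strong_ED C N \<longleftrightarrow> (\<exists>K a lam (P :: nat \<Rightarrow> real^'d^'d).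
      K > 0 \<and> lam > 0 \<and> a \<ge> lam \<and>
      (\<forall>n. P n ** P n = P n) \<and>
      (\<forall>n. C n ** P n = P (Suc n) ** C n) \<and>
      (\<forall>m n x. n \<le> m \<longrightarrow>
         N m (cocycle C m n *v (P n *v x)) \<le> K * exp (- lam * real (m - n)) * N n x \<and>
         N n (cocycle C n m *v ((mat 1 - P m) *v x)) \<le> K * exp (- lam * real (m - n)) * N m x \<and>
         N m (cocycle C m n *v x) \<le> K * exp (a * real (m - n)) * N n x \<and>
         N n (cocycle C n m *v x) \<le> K * exp (a * real (m - n)) * N m x))"

definition ED_spectrum :: "(nat \<Rightarrow> real^'d^'d) \<Rightarrow> (nat \<Rightarrow> real^'d \<Rightarrow> real) \<Rightarrow> real set" where
  "ED_spectrum A N = {\<tau>. \<tau> > 0 \<and> \<not> strong_ED (\<lambda>n. inverse \<tau> *\<^sub>R A n) N}"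

definition S_space :: "(nat \<Rightarrow> real^'d^'d) \<Rightarrow> (nat \<Rightarrow> real^'d \<Rightarrow> real) \<Rightarrow> real \<Rightarrow> nat \<Rightarrow> (real^'d) set" where
  "S_space A N r n = {v. bdd_above ((\<lambda>m. inverse r ^ (m - n) * N m (cocycle A m n *v v)) ` {n..})}"

end

theory Submission
  imports Defs "HOL-Real_Asymp.Real_Asymp"
begin

lemma minv_props:
  fixes M :: "real^'d^'d"
  assumes "invertible M"
  shows "M ** matrix_inv M = mat 1 \<and> matrix_inv M ** M = mat 1"
  using assms unfolding invertible_def matrix_inv_def by (rule someI_ex)

lemma minv_unique:
  fixes M B :: "real^'d^'d"
  assumes "M ** B = mat 1" "B ** M = mat 1"
  shows "matrix_inv M = B"
proof -
  have inv: "invertible M" using assms unfolding invertible_def by blast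
  have "matrix_inv M = matrix_inv M ** (M ** B)" using assms by simp
  also have "\<dots> = (matrix_inv M ** M) ** B" by (simp add: matrix_mul_assoc)
  also have "\<dots> = B" using minv_props[OF inv] by simp
  finally show ?thesis .
qed

lemma fwd_invertible:
  fixes B :: "nat \<Rightarrow> real^'d^'d"
  assumes "\<And>n. invertible (B n)"
  shows "invertible (cocycle_fwd B n k)"
proof (induction k)
  case 0 then show ?case by (auto simp: invertible_def)
next
  case (Suc k) then show ?case using assms by (simp add: invertible_mult)
qed

lemma fwd_scale:
  fixes B :: "nat \<Rightarrow> real^'d^'d"
  shows "cocycle_fwd (\<lambda>n. c *\<^sub>R B n) n k = (c ^ k) *\<^sub>R cocycle_fwd B n k"
proof (induction k)
  case 0 then show ?case by simp
next
  case (Suc k) then show ?case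
    by (simp add: matrix_scalar_ac scalar_matrix_assoc[symmetric])
qed

lemma coc_scale_fwd:
  fixes B :: "nat \<Rightarrow> real^'d^'d"
  assumes "n \<le> m"
  shows "cocycle (\<lambda>n. c *\<^sub>R B n) m n = (c ^ (m - n)) *\<^sub>R cocycle B m n"
  using assms by (simp add: cocycle_def fwd_scale)

lemma coc_scale_bwd:
  fixes B :: "nat \<Rightarrow> real^'d^'d"
  assumes "n \<le> m" "\<And>n. invertible (B n)" "c \<noteq> 0"
  shows "cocycle (\<lambda>n. c *\<^sub>R B n) n m = (inverse c ^ (m - n)) *\<^sub>R cocycle B n m"
proof (cases "m = n")
  case True then show ?thesis by (simp add: cocycle_def)
next
  case False
  let ?M = "cocycle_fwd B n (m - n)"
  have inv: "invertible ?M" using fwd_invertible assms(2) by blast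
  have "matrix_inv ((c ^ (m - n)) *\<^sub>R ?M) = (inverse c ^ (m - n)) *\<^sub>R matrix_inv ?M"
  proof (rule minv_unique)
    show "(c ^ (m - n)) *\<^sub>R ?M ** ((inverse c ^ (m - n)) *\<^sub>R matrix_inv ?M) = mat 1"
      using minv_props[OF inv] assms(3)
      by (simp add: matrix_scalar_ac scalar_matrix_assoc[symmetric] power_inverse)
    show "(inverse c ^ (m - n)) *\<^sub>R matrix_inv ?M ** ((c ^ (m - n)) *\<^sub>R ?M) = mat 1"
      using minv_props[OF inv] assms(3)
      by (simp add: matrix_scalar_ac scalar_matrix_assoc[symmetric] power_inverse)
  qed
  then show ?thesis using assms False by (simp add: cocycle_def fwd_scale)
qed

lemma coc_inv:
  fixes B :: "nat \<Rightarrow> real^'d^'d"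
  assumes "n \<le> m" "\<And>n. invertible (B n)"
  shows "cocycle B n m ** cocycle B m n = mat 1"
proof (cases "m = n")
  case True then show ?thesis by (simp add: cocycle_def)
next
  case False
  have inv: "invertible (cocycle_fwd B n (m - n))" using fwd_invertible assms(2) by blast
  show ?thesis using minv_props[OF inv] assms False by (simp add: cocycle_def)
qed

lemma fwd_invariant:
  fixes B P :: "nat \<Rightarrow> real^'d^'d"
  assumes "\<And>n. B n ** P n = P (Suc n) ** B n"
  shows "cocycle_fwd B n k ** P n = P (n + k) ** cocycle_fwd B n k"
proof (induction k)
  case 0 then show ?case by simp
next
  case (Suc k)
  have "cocycle_fwd B n (Suc k) ** P n = B (n + k) ** (cocycle_fwd B n k ** P n)"
    by (simp add: matrix_mul_assoc)
  also have "\<dots> = (B (n + k) ** P (n + k)) ** cocycle_fwd B n k"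
    using Suc by (simp add: matrix_mul_assoc)
  also have "\<dots> = P (n + Suc k) ** cocycle_fwd B n (Suc k)"
    using assms by (simp add: matrix_mul_assoc)
  finally show ?case .
qed

definition ED_with where
  "ED_with C N K a lam (P :: nat \<Rightarrow> real^'d^'d) \<longleftrightarrow>
      K > 0 \<and> lam > 0 \<and> a \<ge> lam \<and>
      (\<forall>n. P n ** P n = P n) \<and>
      (\<forall>n. C n ** P n = P (Suc n) ** C n) \<and>
      (\<forall>m n x. n \<le> m \<longrightarrow>
         N m (cocycle C m n *v (P n *v x)) \<le> K * exp (- lam * real (m - n)) * N n x \<and>
         N n (cocycle C n m *v ((mat 1 - P m) *v x)) \<le> K * exp (- lam * real (m - n)) * N m x \<and>
         N m (cocycle C m n *v x) \<le> K * exp (a * real (m - n)) * N n x \<and>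
         N n (cocycle C n m *v x) \<le> K * exp (a * real (m - n)) * N m x)"

lemma strong_ED_iff: "strong_ED C N \<longleftrightarrow> (\<exists>K a lam P. ED_with C N K a lam P)"
  unfolding strong_ED_def ED_with_def by blast

lemma norm_scale:
  assumes "is_norm M"
  shows "M (r *\<^sub>R y) = \<bar>r\<bar> * M y" "M y \<ge> 0"
  using assms unfolding is_norm_def by auto

lemma norm_diff:
  assumes "is_norm M"
  shows "M (x - y) \<le> M x + M y"
proof -
  have "M (x + (-1) *\<^sub>R y) \<le> M x + M ((-1) *\<^sub>R y)" using assms unfolding is_norm_def by blast
  also have "M ((-1) *\<^sub>R y) = M y" using assms unfolding is_norm_def by (metis abs_minus_cancel abs_one mult_1)
  finally show ?thesis by simp
qed

lemma pow_le_exp: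
  fixes c :: real
  assumes "c > 0"
  shows "c ^ k \<le> exp (\<bar>ln c\<bar> * real k)" "inverse c ^ k \<le> exp (\<bar>ln c\<bar> * real k)"
proof -
  have "c ^ k = exp (real k * ln c)" using assms by (simp add: exp_of_nat_mult)
  also have "\<dots> \<le> exp (\<bar>ln c\<bar> * real k)" by (simp add: mult.commute mult_left_mono)
  finally show "c ^ k \<le> exp (\<bar>ln c\<bar> * real k)" .
  have "inverse c ^ k = exp (real k * (- ln c))" using assms
    by (simp add: exp_of_nat_mult exp_minus power_inverse)
  also have "\<dots> \<le> exp (\<bar>ln c\<bar> * real k)" by (metis abs_ge_minus_self exp_le_cancel_iff mult.commute mult_left_mono of_nat_0_le_iff mult_minus_right)
  finally show "inverse c ^ k \<le> exp (\<bar>ln c\<bar> * real k)" .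
qed

lemma bound_helper:
  fixes s y K b d z k :: real
  assumes "0 \<le> s" "s \<le> exp (d * k)" "y \<le> K * exp (b * k) * z" "0 \<le> y"
  shows "s * y \<le> K * exp ((b + d) * k) * z"
proof -
  have "s * y \<le> exp (d * k) * y" using assms by (simp add: mult_right_mono)
  also have "\<dots> \<le> exp (d * k) * (K * exp (b * k) * z)" using assms by simp
  also have "\<dots> = K * exp ((b + d) * k) * z" by (simp add: distrib_right exp_add)
  finally show ?thesis .
qed

lemma ED_scale:
  fixes B P :: "nat \<Rightarrow> real^'d^'d"
  assumes ed: "ED_with B N K a lam P" and inv: "\<And>n. invertible (B n)"
    and norms: "\<And>n. is_norm (N n)" and c: "c > 0" and lc: "\<bar>ln c\<bar> < lam"
  shows "ED_with (\<lambda>n. c *\<^sub>R B n) N K (a + \<bar>ln c\<bar>) (lam - \<bar>ln c\<bar>) P"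
proof -
  let ?d = "\<bar>ln c\<bar>"
  have E: "K > 0" "lam > 0" "a \<ge> lam" "\<And>n. P n ** P n = P n" "\<And>n. B n ** P n = P (Suc n) ** B n"
    using ed unfolding ED_with_def by auto
  have E2: "\<And>m n x. n \<le> m \<Longrightarrow>
         N m (cocycle B m n *v (P n *v x)) \<le> K * exp (- lam * real (m - n)) * N n x \<and>
         N n (cocycle B n m *v ((mat 1 - P m) *v x)) \<le> K * exp (- lam * real (m - n)) * N m x \<and>
         N m (cocycle B m n *v x) \<le> K * exp (a * real (m - n)) * N n x \<and>
         N n (cocycle B n m *v x) \<le> K * exp (a * real (m - n)) * N m x"
    using ed unfolding ED_with_def by blast
  have inv2: "\<And>n. c *\<^sub>R B n ** P n = P (Suc n) ** (c *\<^sub>R B n)"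
    using E(5) by (simp add: matrix_scalar_ac scalar_matrix_assoc[symmetric])
  have "N m (cocycle (\<lambda>n. c *\<^sub>R B n) m n *v (P n *v x)) \<le> K * exp (- (lam - ?d) * real (m - n)) * N n x \<and>
         N n (cocycle (\<lambda>n. c *\<^sub>R B n) n m *v ((mat 1 - P m) *v x)) \<le> K * exp (- (lam - ?d) * real (m - n)) * N m x \<and>
         N m (cocycle (\<lambda>n. c *\<^sub>R B n) m n *v x) \<le> K * exp ((a + ?d) * real (m - n)) * N n x \<and>
         N n (cocycle (\<lambda>n. c *\<^sub>R B n) n m *v x) \<le> K * exp ((a + ?d) * real (m - n)) * N m x"
    if nm: "n \<le> m" for m n x
  proof -
    have f: "cocycle (\<lambda>n. c *\<^sub>R B n) m n = (c ^ (m - n)) *\<^sub>R cocycle B m n"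
      using coc_scale_fwd nm by blast
    have b: "cocycle (\<lambda>n. c *\<^sub>R B n) n m = (inverse c ^ (m - n)) *\<^sub>R cocycle B n m"
      using coc_scale_bwd[OF nm inv] c by simp
    have p1: "0 \<le> c ^ (m - n)" "0 \<le> inverse c ^ (m - n)" using c by auto
    have e: "- (lam - ?d) = - lam + ?d" by simp
    note pe = pow_le_exp[OF c, of "m - n"]
    note E2' = E2[OF nm, of x]
    show ?thesis unfolding f b e
      apply (simp only: scaleR_matrix_vector_assoc[symmetric] norm_scale[OF norms] abs_of_nonneg[OF p1(1)] abs_of_nonneg[OF p1(2)])
      using bound_helper[OF p1(1) pe(1)] bound_helper[OF p1(2) pe(2)] E2' norm_scale(2)[OF norms]
      by meson
  qed
  then show ?thesis unfolding ED_with_def using E inv2 lc by auto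
qed


lemma S_char:
  fixes A P :: "nat \<Rightarrow> real^'d^'d"
  assumes inv: "\<And>n. invertible (A n)" and norms: "\<And>n. is_norm (N n)"
    and tau: "\<tau> > 0" and ed: "ED_with (\<lambda>n. inverse \<tau> *\<^sub>R A n) N K a lam P"
  shows "S_space A N \<tau> n = {v. P n *v v = v}"
proof -
  define C where "C = (\<lambda>n. inverse \<tau> *\<^sub>R A n)"
  have invC: "\<And>n. invertible (C n)" unfolding C_def using inv tau by (simp add: scalar_invertible)
  have E: "K > 0" "lam > 0" "\<And>n. P n ** P n = P n" "\<And>n. C n ** P n = P (Suc n) ** C n"
    using ed unfolding ED_with_def C_def by auto
  have E2: "\<And>m n x. n \<le> m \<Longrightarrow>
         N m (cocycle C m n *v (P n *v x)) \<le> K * exp (- lam * real (m - n)) * N n x \<and>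
         N n (cocycle C n m *v ((mat 1 - P m) *v x)) \<le> K * exp (- lam * real (m - n)) * N m x"
    using ed unfolding ED_with_def C_def by blast
  have key: "inverse \<tau> ^ (m - n) * N m (cocycle A m n *v v) = N m (cocycle C m n *v v)"
    if "m \<in> {n..}" for m v
  proof -
    have "cocycle C m n = (inverse \<tau> ^ (m - n)) *\<^sub>R cocycle A m n"
      unfolding C_def using coc_scale_fwd that by auto
    then show ?thesis using tau
      by (simp add: scaleR_matrix_vector_assoc[symmetric] norm_scale[OF norms])
  qed
  have S: "S_space A N \<tau> n = {v. bdd_above ((\<lambda>m. N m (cocycle C m n *v v)) ` {n..})}"
  proof -
    have "\<And>v. (\<lambda>m. inverse \<tau> ^ (m - n) * N m (cocycle A m n *v v)) ` {n..} = (\<lambda>m. N m (cocycle C m n *v v)) ` {n..}"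
      by (rule image_cong) (use key in auto)
    then show ?thesis unfolding S_space_def by simp
  qed
  have P1: "N m (cocycle C m n *v (P n *v v)) \<le> K * N n v" if "n \<le> m" for m v
  proof -
    have "N m (cocycle C m n *v (P n *v v)) \<le> K * exp (- lam * real (m - n)) * N n v"
      using E2[OF that] by blast
    also have "\<dots> \<le> K * 1 * N n v"
      using E norm_scale(2)[OF norms] by (intro mult_right_mono mult_left_mono) auto
    finally show ?thesis by simp
  qed
  have invar: "cocycle C m n ** P n = P m ** cocycle C m n" if "n \<le> m" for m
    using fwd_invariant[of C P n "m - n", OF E(4)] that by (simp add: cocycle_def)
  show ?thesis
  proof (rule set_eqI, rule iffI)
    fix v assume "v \<in> {v. P n *v v = v}"
    then have pv: "P n *v v = v" by simp
    have "bdd_above ((\<lambda>m. N m (cocycle C m n *v v)) ` {n..})"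
      by (rule bdd_aboveI2[where M="K * N n v"]) (metis P1 pv atLeast_iff)
    then show "v \<in> S_space A N \<tau> n" unfolding S by simp
  next
    fix v assume "v \<in> S_space A N \<tau> n"
    then obtain Bd where Bd: "\<And>m. n \<le> m \<Longrightarrow> N m (cocycle C m n *v v) \<le> Bd"
      unfolding S bdd_above_def by auto
    define w where "w = v - P n *v v"
    have Pw: "P n *v w = 0"
      unfolding w_def by (simp add: matrix_vector_mult_diff_distrib matrix_vector_mul_assoc E(3))
    have bw: "N n w \<le> K * exp (- lam * real k) * (Bd + K * N n v)" for k
    proof -
      define m where "m = n + k"
      have nm: "n \<le> m" unfolding m_def by simp
      have Cw: "cocycle C m n *v w = cocycle C m n *v v - cocycle C m n *v (P n *v v)"
        unfolding w_def by (simp add: matrix_vector_mult_diff_distrib)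
      have bC: "N m (cocycle C m n *v w) \<le> Bd + K * N n v"
        unfolding Cw using norm_diff[OF norms] Bd[OF nm] P1[OF nm] by (meson add_mono order_trans)
      have "P m *v (cocycle C m n *v w) = 0"
        using invar[OF nm] Pw by (metis matrix_vector_mul_assoc matrix_vector_mult_0_right)
      then have Q: "(mat 1 - P m) *v (cocycle C m n *v w) = cocycle C m n *v w"
        by (simp add: matrix_vector_mult_diff_rdistrib)
      have "N n w = N n (cocycle C n m *v (cocycle C m n *v w))"
        using coc_inv[OF nm invC] by (simp add: matrix_vector_mul_assoc)
      also have "\<dots> = N n (cocycle C n m *v ((mat 1 - P m) *v (cocycle C m n *v w)))"
        using Q by simp
      also have "\<dots> \<le> K * exp (- lam * real (m - n)) * N m (cocycle C m n *v w)"
        using E2[OF nm] by blast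
      also have "\<dots> \<le> K * exp (- lam * real (m - n)) * (Bd + K * N n v)"
        using E bC by (intro mult_left_mono) auto
      finally show ?thesis unfolding m_def by simp
    qed
    have lim: "(\<lambda>k. K * exp (- lam * real k) * (Bd + K * N n v)) \<longlonglongrightarrow> 0"
      using E(2) by real_asymp
    have "N n w \<le> 0"
      by (rule LIMSEQ_le_const[OF lim]) (use bw in auto)
    then have "N n w = 0" using norm_scale(2)[OF norms, of n w] by linarith
    then have "w = 0" using norms[of n] unfolding is_norm_def by blast
    then show "v \<in> {v. P n *v v = v}" unfolding w_def by simp
  qed
qed


lemma good_nbhd:
  fixes A P :: "nat \<Rightarrow> real^'d^'d"
  assumes inv: "\<And>n. invertible (A n)" and norms: "\<And>n. is_norm (N n)"
    and tau: "\<tau> > 0" and ed: "ED_with (\<lambda>n. inverse \<tau> *\<^sub>R A n) N K a lam P"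
    and t1: "\<tau> * exp (- lam) < \<tau>'" and t2: "\<tau>' < \<tau> * exp lam"
  shows "\<exists>a' lam'. ED_with (\<lambda>n. inverse \<tau>' *\<^sub>R A n) N K a' lam' P"
proof -
  have tp: "\<tau>' > 0" using t1 tau by (smt (verit) exp_gt_zero mult_pos_pos)
  define c where "c = \<tau> / \<tau>'"
  have c: "c > 0" unfolding c_def using tau tp by simp
  have lc: "ln c = ln \<tau> - ln \<tau>'" unfolding c_def using tau tp by (simp add: ln_div)
  have "ln (\<tau> * exp (- lam)) < ln \<tau>'" using t1 tau tp by simp
  then have l1: "ln \<tau> - lam < ln \<tau>'" using tau by (simp add: ln_mult)
  have "ln \<tau>' < ln (\<tau> * exp lam)" using t2 tau tp by simp
  then have l2: "ln \<tau>' < ln \<tau> + lam" using tau by (simp add: ln_mult)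
  have lcl: "\<bar>ln c\<bar> < lam" using lc l1 l2 by linarith
  have invB: "\<And>n. invertible (inverse \<tau> *\<^sub>R A n)" using inv tau by (simp add: scalar_invertible)
  have eq: "(\<lambda>n. c *\<^sub>R (inverse \<tau> *\<^sub>R A n)) = (\<lambda>n. inverse \<tau>' *\<^sub>R A n)"
    unfolding c_def using tau by (simp add: field_simps)
  show ?thesis using ED_scale[OF ed invB norms c lcl] unfolding eq by blast
qed

theorem lemma7p3:
  fixes A :: "nat \<Rightarrow> real^'d^'d" and N :: "nat \<Rightarrow> real^'d \<Rightarrow> real"
  assumes inv: "\<And>n. invertible (A n)"
    and norms: "\<And>n. is_norm (N n)"
    and K: "K > 0" and a: "a > 0"
    and bd1: "\<And>m n x. n \<le> m \<Longrightarrow> N m (cocycle A m n *v x) \<le> K * exp (a * real (m - n)) * N n x"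
    and bd2: "\<And>m n x. n \<le> m \<Longrightarrow> N n (cocycle A n m *v x) \<le> K * exp (a * real (m - n)) * N m x"
  shows "closedin (top_of_set {0<..}) (ED_spectrum A N) \<and>
         (\<forall>r \<in> {0<..} - ED_spectrum A N. \<exists>l u. 0 < l \<and> l < r \<and> r < u \<and>
            (\<forall>r' \<in> {l<..<u}. \<forall>n. S_space A N r n = S_space A N r' n))"
proof -
  have G: "{0<..} - ED_spectrum A N = {\<tau>. \<tau> > 0 \<and> strong_ED (\<lambda>n. inverse \<tau> *\<^sub>R A n) N}"
    unfolding ED_spectrum_def by auto
  have nb: "\<exists>l u. 0 < l \<and> l < r \<and> r < u \<and>
      (\<forall>r' \<in> {l<..<u}. r' \<in> {0<..} - ED_spectrum A N \<and> (\<forall>n. S_space A N r n = S_space A N r' n))"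
    if r: "r \<in> {0<..} - ED_spectrum A N" for r
  proof -
    have rp: "r > 0" and "strong_ED (\<lambda>n. inverse r *\<^sub>R A n) N" using r G by auto
    then obtain K a lam P where ed: "ED_with (\<lambda>n. inverse r *\<^sub>R A n) N K a lam P"
      unfolding strong_ED_iff by blast
    have lam: "lam > 0" using ed unfolding ED_with_def by auto
    have e1: "exp (- lam) < 1" "exp lam > 1" using lam by auto
    have l: "0 < r * exp (- lam)" "r * exp (- lam) < r" using rp e1 by auto
    have u: "r < r * exp lam" using rp e1 by auto
    have "r' \<in> {0<..} - ED_spectrum A N \<and> (\<forall>n. S_space A N r n = S_space A N r' n)"
      if r': "r' \<in> {r * exp (- lam)<..<r * exp lam}" for r'
    proof -
      have r'p: "r' > 0" using r' l by auto
      obtain a' lam' where ed': "ED_with (\<lambda>n. inverse r' *\<^sub>R A n) N K a' lam' P"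
        using good_nbhd[OF inv norms rp ed, of r'] r' by (auto simp del: scaleR_conv_of_real)
      have "strong_ED (\<lambda>n. inverse r' *\<^sub>R A n) N" unfolding strong_ED_iff using ed' by blast
      then show ?thesis using S_char[OF inv norms rp ed] S_char[OF inv norms r'p ed'] G r'p by auto
    qed
    then show ?thesis using l u by blast
  qed
  have sub: "ED_spectrum A N \<subseteq> {0<..}" unfolding ED_spectrum_def by auto
  have op: "openin (top_of_set {0<..}) ({0<..} - ED_spectrum A N)"
    unfolding openin_euclidean_subtopology_iff
  proof (intro conjI ballI)
    show "{0<..} - ED_spectrum A N \<subseteq> {0<..}" by blast
    fix r assume r: "r \<in> {0<..} - ED_spectrum A N"
    then obtain l u where lu: "0 < l" "l < r" "r < u"
      and all: "\<forall>r' \<in> {l<..<u}. r' \<in> {0<..} - ED_spectrum A N" using nb by blast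
    show "\<exists>e>0. \<forall>x'\<in>{0<..}. dist x' r < e \<longrightarrow> x' \<in> {0<..} - ED_spectrum A N"
    proof (intro exI[of _ "min (r - l) (u - r)"] conjI ballI impI)
      show "0 < min (r - l) (u - r)" using lu by simp
      fix x' :: real assume "dist x' r < min (r - l) (u - r)"
      then have "x' \<in> {l<..<u}" by (auto simp: dist_real_def)
      then show "x' \<in> {0<..} - ED_spectrum A N" using all by blast
    qed
  qed
  have "closedin (top_of_set {0<..}) (ED_spectrum A N)"
    unfolding closedin_def using sub op by simp
  then show ?thesis using nb by blast
qed

end
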